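(* Let $G$ be a simple 3-connected graph with $n\geq 5$ vertices in which every vertex has degree at most $4$. Then one can add edges (but no vertices) to $G$ so that the resulting multigraph $G'$ has the following properties: - $G'$ is 3-connected; - $G'$ is 4-regular; - $G'$ has no loops; - $G'$ has at most one double edge. That is, at most one pair of vertices is joined by more than one edge, and such a pair is joined by exactly two edges.
   Context: A (multi)graph is 3-connected if it has more than $3$ vertices and, for any two vertices $u,v$, the graph obtained by deleting $u$ and $v$ is connected. A graph is 4-regular if every vertex has degree exactly $4$, with degrees counted with edge multiplicity. *)

theory Defs
  imports Main
begin

text \<open>A (finite, undirected) multigraph on vertex set V is given by a multiplicity
function m: m u v is the number of edges joining u and v (m v v = number of loops at v).\<close>

definition multigraph :: "'a set \<Rightarrow> ('a \<Rightarrow> 'a \<Rightarrow> nat) \<Rightarrow> bool" where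
  "multigraph V m \<longleftrightarrow> finite V \<and> (\<forall>u v. m u v = m v u) \<and>
     (\<forall>u v. 0 < m u v \<longrightarrow> u \<in> V \<and> v \<in> V)"

definition simple_graph :: "'a set \<Rightarrow> ('a \<Rightarrow> 'a \<Rightarrow> nat) \<Rightarrow> bool" where
  "simple_graph V m \<longleftrightarrow> multigraph V m \<and> (\<forall>u v. m u v \<le> 1) \<and> (\<forall>v. m v v = 0)"

text \<open>Degree counted with multiplicity; a loop contributes 2.\<close>
definition degree :: "'a set \<Rightarrow> ('a \<Rightarrow> 'a \<Rightarrow> nat) \<Rightarrow> 'a \<Rightarrow> nat" where
  "degree V m v = (\<Sum>u\<in>V. m v u) + m v v"

definition connected_on :: "'a set \<Rightarrow> ('a \<Rightarrow> 'a \<Rightarrow> nat) \<Rightarrow> bool" where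
  "connected_on S m \<longleftrightarrow>
     (\<forall>x\<in>S. \<forall>y\<in>S. (x, y) \<in> {(a, b). a \<in> S \<and> b \<in> S \<and> 0 < m a b}\<^sup>*)"

definition three_connected :: "'a set \<Rightarrow> ('a \<Rightarrow> 'a \<Rightarrow> nat) \<Rightarrow> bool" where
  "three_connected V m \<longleftrightarrow> card V > 3 \<and>
     (\<forall>u\<in>V. \<forall>v\<in>V. connected_on (V - {u, v}) m)"

end

theory Submission
  imports Defs
begin

definition pairind :: "'a \<Rightarrow> 'a \<Rightarrow> 'a \<Rightarrow> 'a \<Rightarrow> nat" where
  "pairind x y u v = (if (u = x \<and> v = y) \<or> (u = y \<and> v = x) then 1 else 0)"

lemma sum_pairind:
  assumes "finite D" "x \<noteq> y" "x \<in> D" "y \<in> D"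
  shows "(\<Sum>v\<in>D. pairind x y u v) = (if u = x \<or> u = y then 1 else 0)"
proof (cases "u = x")
  case True
  then have "(\<Sum>v\<in>D. pairind x y u v) = (\<Sum>v\<in>D. if v = y then 1 else 0)"
    using assms by (intro sum.cong) (auto simp: pairind_def)
  then show ?thesis using assms True by simp
next
  case False
  show ?thesis
  proof (cases "u = y")
    case True
    then have "(\<Sum>v\<in>D. pairind x y u v) = (\<Sum>v\<in>D. if v = x then 1 else 0)"
      using assms by (intro sum.cong) (auto simp: pairind_def)
    then show ?thesis using assms True by simp
  next
    case F2: False
    then have "(\<Sum>v\<in>D. pairind x y u v) = 0"
      using False by (intro sum.neutral) (auto simp: pairind_def)
    then show ?thesis using False F2 by simp
  qed
qed

lemma nb_card:
  assumes "finite V" "\<forall>u v. m u v \<le> (1::nat)" "m v v = 0"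
  shows "card {u\<in>V. 0 < m v u} = degree V m v"
proof -
  have "degree V m v = (\<Sum>u\<in>V. m v u)" using assms by (simp add: degree_def)
  also have "\<dots> = (\<Sum>u\<in>V. if 0 < m v u then 1 else 0)"
  proof (intro sum.cong refl)
    fix u have "m v u \<le> 1" using assms(2) by blast
    then show "m v u = (if 0 < m v u then 1 else 0)" by auto
  qed
  also have "\<dots> = card {u\<in>V. 0 < m v u}"
    using assms(1) by (simp add: sum.If_cases Int_def)
  finally show ?thesis by simp
qed

lemma handshake:
  fixes m :: "'a \<Rightarrow> 'a \<Rightarrow> nat"
  assumes "finite V" "\<forall>u v. m u v = m v u" "\<forall>x. m x x = 0"
  shows "even (\<Sum>v\<in>V. \<Sum>u\<in>V. m v u)"
  using assms(1)
proof (induction V rule: finite_induct)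
  case empty
  then show ?case by simp
next
  case (insert x F)
  have "(\<Sum>v\<in>insert x F. \<Sum>u\<in>insert x F. m v u)
      = (m x x + (\<Sum>u\<in>F. m x u)) + (\<Sum>v\<in>F. m v x + (\<Sum>u\<in>F. m v u))"
    using insert by simp
  also have "\<dots> = m x x + (\<Sum>u\<in>F. m x u) + (\<Sum>v\<in>F. m v x) + (\<Sum>v\<in>F. \<Sum>u\<in>F. m v u)"
    using insert by (simp add: sum.distrib)
  also have "(\<Sum>v\<in>F. m v x) = (\<Sum>u\<in>F. m x u)" by (rule sum.cong[OF refl]) (rule assms(2)[rule_format])
  also have "m x x = 0" using assms(3) by blast
  finally have "(\<Sum>v\<in>insert x F. \<Sum>u\<in>insert x F. m v u) = 2 * (\<Sum>u\<in>F. m x u) + (\<Sum>v\<in>F. \<Sum>u\<in>F. m v u)" by simp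
  then show ?case using insert.IH by simp
qed

lemma conn_mono:
  assumes "\<forall>u v. m u v \<le> (m' u v::nat)" "connected_on S m"
  shows "connected_on S m'"
proof -
  have sub: "{(a, b). a \<in> S \<and> b \<in> S \<and> 0 < m a b} \<subseteq> {(a, b). a \<in> S \<and> b \<in> S \<and> 0 < m' a b}"
    using assms(1) by (auto intro: less_le_trans)
  show ?thesis using assms(2) rtrancl_mono[OF sub] unfolding connected_on_def by blast
qed

lemma even_cases: "even (n::nat) \<Longrightarrow> n = 0 \<or> n = 2 \<or> n \<ge> 4"
  by presburger

lemma match:
  fixes m :: "'a \<Rightarrow> 'a \<Rightarrow> nat"
  assumes sym: "\<forall>u v. m u v = m v u" and le1: "\<forall>u v. m u v \<le> 1"
  shows "finite D \<Longrightarrow> even (card D) \<Longrightarrow> (\<forall>x\<in>D. card {y\<in>D. 0 < m x y} \<le> 3) \<Longrightarrow>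
    (\<forall>S\<subseteq>D. card S = 4 \<longrightarrow> \<not>(\<forall>x\<in>S. \<forall>y\<in>S. x \<noteq> y \<longrightarrow> 0 < m x y)) \<Longrightarrow>
    \<exists>a. (\<forall>u v. a u v = a v u) \<and> (\<forall>u v. a u v \<le> 1) \<and> (\<forall>u. a u u = 0) \<and>
        (\<forall>u v. 0 < a u v \<longrightarrow> u \<in> D \<and> v \<in> D) \<and> (\<forall>x\<in>D. (\<Sum>y\<in>D. a x y) = 1) \<and>
        (\<forall>p q r s. 2 \<le> m p q + a p q \<and> 2 \<le> m r s + a r s \<longrightarrow> {p, q} = {r, s})"
proof (induction "card D" arbitrary: D rule: less_induct)
  case less
  consider "card D = 0" | "card D = 2" | "card D \<ge> 4" using even_cases[OF less(3)] by linarith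
  then show ?case
  proof cases
    case 1
    then have "D = {}" using less(2) by simp
    have nd: "\<not> 2 \<le> m p q" for p q using le1[rule_format, of p q] by linarith
    then show ?thesis using \<open>D = {}\<close> by (intro exI[of _ "\<lambda>u v. 0"]) simp
  next
    case 2
    then obtain x y where xy: "x \<noteq> y" "D = {x, y}" by (meson card_2_iff)
    show ?thesis
    proof (intro exI[of _ "pairind x y"] conjI allI impI)
      fix p q r s
      assume h: "2 \<le> m p q + pairind x y p q \<and> 2 \<le> m r s + pairind x y r s"
      have pi: "pairind x y u v \<le> 1" for u v by (simp add: pairind_def)
      have "pairind x y p q = 1" using h le1[rule_format, of p q] pi[of p q] by linarith
      then have "(p = x \<and> q = y) \<or> (p = y \<and> q = x)" by (simp add: pairind_def split: if_splits)
      then have e1: "{p, q} = {x, y}" by blast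
      have "pairind x y r s = 1" using h le1[rule_format, of r s] pi[of r s] by linarith
      then have "(r = x \<and> s = y) \<or> (r = y \<and> s = x)" by (simp add: pairind_def split: if_splits)
      then have e2: "{r, s} = {x, y}" by blast
      show "{p, q} = {r, s}" using e1 e2 by simp
    next
      fix u v show "pairind x y u v = pairind x y v u" by (auto simp: pairind_def)
    next
      fix u v show "pairind x y u v \<le> 1" by (auto simp: pairind_def)
    next
      fix u show "pairind x y u u = 0" using xy by (auto simp: pairind_def)
    next
      fix u v assume "0 < pairind x y u v"
      then show "u \<in> D" "v \<in> D" using xy by (auto simp: pairind_def split: if_splits)
    next
      show "\<forall>z\<in>D. (\<Sum>v\<in>D. pairind x y z v) = 1"
        using sum_pairind[of D x y] xy by auto
    qed
  next
    case 3
    obtain x y where xy: "x \<in> D" "y \<in> D" "x \<noteq> y" "m x y = 0"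
    proof (cases "card D = 4")
      case True
      then have "\<not>(\<forall>x\<in>D. \<forall>y\<in>D. x \<noteq> y \<longrightarrow> 0 < m x y)" using less(5) by blast
      then show ?thesis using that by blast
    next
      case False
      then have c6: "card D \<ge> 5" using 3 by simp
      then obtain x where x: "x \<in> D" by fastforce
      let ?N = "{y\<in>D. 0 < m x y}"
      have "card ?N \<le> 3" using less(4) x by blast
      have "card (D - {x}) \<ge> 4" using c6 x less(2) by simp
      have "\<not> (D - {x} \<subseteq> ?N)"
      proof
        assume "D - {x} \<subseteq> ?N"
        then have "card (D - {x}) \<le> card ?N" using less(2) by (intro card_mono) auto
        then show False using \<open>card ?N \<le> 3\<close> \<open>card (D - {x}) \<ge> 4\<close> by simp
      qed
      then obtain y where "y \<in> D" "y \<noteq> x" "m x y = 0" by auto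
      then show ?thesis using that x by blast
    qed
    define D' where "D' = D - {x, y}"
    have cD': "card D' = card D - 2" using xy less(2) by (simp add: D'_def)
    have "card D' < card D" using cD' 3 by simp
    moreover have "finite D'" using less(2) by (simp add: D'_def)
    moreover have "even (card D')" using cD' less(3) 3 by simp
    moreover have "\<forall>z\<in>D'. card {w\<in>D'. 0 < m z w} \<le> 3"
    proof
      fix z assume z: "z \<in> D'"
      have "card {w\<in>D'. 0 < m z w} \<le> card {w\<in>D. 0 < m z w}"
        using less(2) by (intro card_mono) (auto simp: D'_def)
      then show "card {w\<in>D'. 0 < m z w} \<le> 3" using less(4) z by (force simp: D'_def)
    qed
    moreover have "\<forall>S\<subseteq>D'. card S = 4 \<longrightarrow> \<not>(\<forall>x\<in>S. \<forall>y\<in>S. x \<noteq> y \<longrightarrow> 0 < m x y)"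
    proof (intro allI impI)
      fix S assume S: "S \<subseteq> D'" "card S = 4"
      then have "S \<subseteq> D" by (auto simp: D'_def)
      then show "\<not>(\<forall>x\<in>S. \<forall>y\<in>S. x \<noteq> y \<longrightarrow> 0 < m x y)" using less(5) S(2) by blast
    qed
    ultimately obtain a0 where a0:
      "\<forall>u v. a0 u v = a0 v u" "\<forall>u v. a0 u v \<le> 1" "\<forall>u. a0 u u = 0"
      "\<forall>u v. 0 < a0 u v \<longrightarrow> u \<in> D' \<and> v \<in> D'" "\<forall>x\<in>D'. (\<Sum>y\<in>D'. a0 x y) = 1"
      "\<forall>p q r s. 2 \<le> m p q + a0 p q \<and> 2 \<le> m r s + a0 r s \<longrightarrow> {p, q} = {r, s}"
      using less(1)[of D'] by blast
    have disj: "a0 u v = 0 \<or> pairind x y u v = 0" for u v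
      using a0(4)[rule_format, of u v] by (auto simp: pairind_def D'_def)
    have myx: "m y x = 0" using xy sym by metis
    show ?thesis
    proof (intro exI[of _ "\<lambda>u v. a0 u v + pairind x y u v"] conjI allI impI ballI)
      fix u v show "a0 u v + pairind x y u v = a0 v u + pairind x y v u"
        using a0(1) by (auto simp: pairind_def)
    next
      fix u v show "a0 u v + pairind x y u v \<le> 1"
        using disj[of u v] a0(2) by (auto simp: pairind_def)
    next
      fix u show "a0 u u + pairind x y u u = 0" using a0(3) xy by (auto simp: pairind_def)
    next
      fix u v assume "0 < a0 u v + pairind x y u v"
      then show "u \<in> D" "v \<in> D" using a0(4)[rule_format, of u v] xy
        by (auto simp: pairind_def D'_def split: if_splits)
    next
      fix z assume z: "z \<in> D"
      have s1: "(\<Sum>v\<in>D. a0 z v) = (if z \<in> D' then 1 else 0)"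
      proof (cases "z \<in> D'")
        case True
        have "(\<Sum>v\<in>D. a0 z v) = (\<Sum>v\<in>D'. a0 z v)"
          using less(2) a0(4) by (intro sum.mono_neutral_right) (auto simp: D'_def)
        then show ?thesis using True a0(5) by simp
      next
        case False
        then have "(\<Sum>v\<in>D. a0 z v) = 0" using a0(4) by (intro sum.neutral) auto
        then show ?thesis using False by simp
      qed
      have "(\<Sum>v\<in>D. a0 z v + pairind x y z v) = (\<Sum>v\<in>D. a0 z v) + (\<Sum>v\<in>D. pairind x y z v)"
        by (simp add: sum.distrib)
      then show "(\<Sum>v\<in>D. a0 z v + pairind x y z v) = 1"
      proof -
        have iff: "z \<in> D' \<longleftrightarrow> \<not>(z = x \<or> z = y)" using z by (auto simp: D'_def)
        have "(\<Sum>v\<in>D. pairind x y z v) = (if z = x \<or> z = y then 1 else 0)"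
          using sum_pairind[of D x y z] less(2) xy by blast
        then show ?thesis using s1 iff \<open>(\<Sum>v\<in>D. a0 z v + pairind x y z v) = _\<close> by simp
      qed
    next
      fix p q r s
      assume h: "2 \<le> m p q + (a0 p q + pairind x y p q) \<and> 2 \<le> m r s + (a0 r s + pairind x y r s)"
      have g: "2 \<le> m p q + a0 p q" if "2 \<le> m p q + (a0 p q + pairind x y p q)" for p q
      proof (cases "pairind x y p q = 0")
        case True then show ?thesis using that by simp
      next
        case False
        then have "(p = x \<and> q = y) \<or> (p = y \<and> q = x)" by (simp add: pairind_def split: if_splits)
        then have m0: "m p q = 0" using xy(4) myx by auto
        have "pairind x y p q \<le> 1" by (simp add: pairind_def)
        moreover have "a0 p q = 0" using disj[of p q] False by blast
        ultimately show ?thesis using that m0 by linarith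
      qed
      show "{p, q} = {r, s}" using a0(6) g h by blast
    qed
  qed
qed

theorem lemma1:
  fixes V :: "'a set" and m :: "'a \<Rightarrow> 'a \<Rightarrow> nat"
  assumes "simple_graph V m"
    and "three_connected V m"
    and "card V \<ge> 5"
    and "\<forall>v\<in>V. degree V m v \<le> 4"
  shows "\<exists>m'. multigraph V m' \<and> (\<forall>u v. m u v \<le> m' u v) \<and>
           three_connected V m' \<and>
           (\<forall>v\<in>V. degree V m' v = 4) \<and>
           (\<forall>v. m' v v = 0) \<and>
           (\<forall>u v. m' u v \<le> 2) \<and>
           (\<forall>a b c d. 2 \<le> m' a b \<and> 2 \<le> m' c d \<longrightarrow> {a, b} = {c, d})"
proof -
  have fin: "finite V" and sym: "\<forall>u v. m u v = m v u" and supp: "\<forall>u v. 0 < m u v \<longrightarrow> u \<in> V \<and> v \<in> V"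
    and le1: "\<forall>u v. m u v \<le> 1" and loop: "\<forall>v. m v v = 0"
    using assms(1) unfolding simple_graph_def multigraph_def by auto
  have conn: "connected_on (V - {u, v}) m" if "u \<in> V" "v \<in> V" for u v
    using assms(2) that unfolding three_connected_def by blast
  have nb: "card {u\<in>V. 0 < m v u} = degree V m v" for v
    using nb_card[OF fin le1] loop by blast
  have deg3: "3 \<le> degree V m v" if v: "v \<in> V" for v
  proof (rule ccontr)
    assume "\<not> 3 \<le> degree V m v"
    define N where "N = {u\<in>V. 0 < m v u}"
    have cN: "card N \<le> 2" using nb[of v] \<open>\<not> 3 \<le> degree V m v\<close> by (simp add: N_def)
    have Nsub: "N \<subseteq> V - {v}" using loop by (auto simp: N_def)
    have finN: "finite N" using fin by (simp add: N_def)
    have "card (V - {v}) \<ge> 4" using assms(3) v fin by simp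
    then have "V - {v} \<noteq> {}" by (metis card.empty not_numeral_le_zero)
    then obtain w where w: "w \<in> V - {v}" by blast
    obtain u1 u2 where u12: "u1 \<in> V" "u2 \<in> V" "v \<noteq> u1" "v \<noteq> u2" "N \<subseteq> {u1, u2}"
    proof -
      consider "card N = 0" | "card N = 1" | "card N = 2" using cN by linarith
      then show ?thesis
      proof cases
        case 1 then have "N = {}" using finN by simp
        then show ?thesis using that[of w w] w by auto
      next
        case 2 then obtain a where "N = {a}" by (meson card_1_singletonE)
        then show ?thesis using that[of a a] Nsub by auto
      next
        case 3 then obtain a b where "N = {a, b}" by (meson card_2_iff)
        then show ?thesis using that[of a b] Nsub by auto
      qed
    qed
    have "card {v, u1, u2} \<le> 3" by (simp add: card_insert_if)
    have "\<not> V \<subseteq> {v, u1, u2}"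
    proof
      assume "V \<subseteq> {v, u1, u2}"
      then have "card V \<le> card {v, u1, u2}" by (intro card_mono) auto
      then show False using assms(3) \<open>card {v, u1, u2} \<le> 3\<close> by linarith
    qed
    then obtain z where z: "z \<in> V" "z \<noteq> v" "z \<noteq> u1" "z \<noteq> u2" by blast
    let ?R = "{(a, b). a \<in> V - {u1, u2} \<and> b \<in> V - {u1, u2} \<and> 0 < m a b}"
    have vz: "v \<in> V - {u1, u2}" "z \<in> V - {u1, u2}" using v z u12 by auto
    have "(v, z) \<in> ?R\<^sup>*" using conn[OF u12(1,2)] vz unfolding connected_on_def by blast
    then have "\<exists>w'. (v, w') \<in> ?R" using z(2) by (cases rule: converse_rtranclE) blast+
    then obtain w' where "(v, w') \<in> ?R" by blast
    then have "w' \<in> N" "w' \<notin> {u1, u2}" by (auto simp: N_def)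
    then show False using u12(5) by blast
  qed
  define D where "D = {v\<in>V. degree V m v \<noteq> 4}"
  have DV: "D \<subseteq> V" by (auto simp: D_def)
  have finD: "finite D" using fin DV finite_subset by blast
  have degD: "degree V m v = 3" if "v \<in> D" for v
    using that deg3[of v] assms(4) by (auto simp: D_def)
  have nbD: "\<forall>x\<in>D. card {y\<in>D. 0 < m x y} \<le> 3"
  proof
    fix x assume x: "x \<in> D"
    have "card {y\<in>D. 0 < m x y} \<le> card {y\<in>V. 0 < m x y}"
      using fin DV by (intro card_mono) auto
    then show "card {y\<in>D. 0 < m x y} \<le> 3" using nb[of x] degD[OF x] by simp
  qed
  have noK4: "\<forall>S\<subseteq>D. card S = 4 \<longrightarrow> \<not>(\<forall>x\<in>S. \<forall>y\<in>S. x \<noteq> y \<longrightarrow> 0 < m x y)"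
  proof (intro allI impI notI)
    fix S assume S: "S \<subseteq> D" "card S = 4" and cl: "\<forall>x\<in>S. \<forall>y\<in>S. x \<noteq> y \<longrightarrow> 0 < m x y"
    have finS: "finite S" using S(2) by (metis card.infinite zero_neq_numeral)
    have closed: "w' \<in> S" if "w \<in> S" "0 < m w w'" for w w'
    proof -
      have wD: "w \<in> D" using that S by blast
      let ?M = "{y\<in>V. 0 < m w y}"
      have cM: "card ?M = 3" using nb[of w] degD[OF wD] by simp
      have sub: "S - {w} \<subseteq> ?M" using cl that(1) S(1) DV by auto
      have "card (S - {w}) = 3" using S(2) that(1) finS by simp
      then have "S - {w} = ?M" using card_subset_eq[OF _ sub] fin cM by simp
      moreover have "w' \<in> ?M" using that(2) supp by blast
      ultimately show ?thesis by blast
    qed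
    have "S \<noteq> {}" using S(2) by auto
    then obtain u where u: "u \<in> S" by blast
    have "card (S - {u}) = 3" using S(2) u finS by simp
    then have "S - {u} \<noteq> {}" by (metis card.empty zero_neq_numeral)
    then obtain x where x: "x \<in> S" "x \<noteq> u" by blast
    have "\<not> V \<subseteq> S"
    proof
      assume "V \<subseteq> S"
      then have "card V \<le> card S" by (rule card_mono[OF finS])
      then show False using assms(3) S(2) by linarith
    qed
    then obtain z where z: "z \<in> V" "z \<notin> S" by blast
    have uV: "u \<in> V" "x \<in> V" using u x S(1) DV by auto
    let ?R = "{(a, b). a \<in> V - {u, u} \<and> b \<in> V - {u, u} \<and> 0 < m a b}"
    have xz: "x \<in> V - {u, u}" "z \<in> V - {u, u}" using uV z x u by auto
    have c': "\<forall>a\<in>V - {u, u}. \<forall>b\<in>V - {u, u}. (a, b) \<in> ?R\<^sup>*"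
      using conn[OF uV(1) uV(1)] unfolding connected_on_def .
    have "(x, z) \<in> ?R\<^sup>*" using bspec[OF bspec[OF c' xz(1)] xz(2)] .
    then have "z \<in> S"
    proof (induction rule: rtrancl_induct)
      case base then show ?case using x by blast
    next
      case (step y w)
      then have "0 < m y w" by simp
      then show ?case using closed[OF step.IH] by blast
    qed
    then show False using z by blast
  qed
  have evD: "even (card D)"
  proof -
    have "(\<Sum>v\<in>V. degree V m v + (if v \<in> D then 1 else 0)) = (\<Sum>v\<in>V. 4)"
      using degD assms(4) by (intro sum.cong refl) (auto simp: D_def)
    moreover have "(\<Sum>v\<in>V. (if v \<in> D then 1 else 0::nat)) = card D"
      using fin DV by (simp add: sum.If_cases Int_absorb1)
    ultimately have eq: "(\<Sum>v\<in>V. degree V m v) + card D = 4 * card V"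
      by (simp add: sum.distrib)
    have "(\<Sum>v\<in>V. degree V m v) = (\<Sum>v\<in>V. \<Sum>u\<in>V. m v u)"
      using loop by (simp add: degree_def)
    then have "even (\<Sum>v\<in>V. degree V m v)" using handshake[OF fin sym loop] by simp
    moreover have "even ((\<Sum>v\<in>V. degree V m v) + card D)" unfolding eq by simp
    ultimately show ?thesis by simp
  qed
  obtain a where a:
      "\<forall>u v. a u v = a v u" "\<forall>u v. a u v \<le> 1" "\<forall>u. a u u = 0"
      "\<forall>u v. 0 < a u v \<longrightarrow> u \<in> D \<and> v \<in> D" "\<forall>x\<in>D. (\<Sum>y\<in>D. a x y) = 1"
      "\<forall>p q r s. 2 \<le> m p q + a p q \<and> 2 \<le> m r s + a r s \<longrightarrow> {p, q} = {r, s}"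
    using match[OF sym le1 finD evD nbD noK4] by blast
  define m' where "m' = (\<lambda>u v. m u v + a u v)"
  have mono: "\<forall>u v. m u v \<le> m' u v" by (simp add: m'_def)
  have "\<forall>u v. 0 < m' u v \<longrightarrow> u \<in> V \<and> v \<in> V"
  proof (intro allI impI)
    fix u v assume "0 < m' u v"
    then have "0 < m u v \<or> 0 < a u v" by (simp add: m'_def)
    then show "u \<in> V \<and> v \<in> V" using supp a(4) DV by blast
  qed
  moreover have "\<forall>u v. m' u v = m' v u"
  proof (intro allI)
    fix u v show "m' u v = m' v u" using sym[rule_format, of u v] a(1)[rule_format, of u v]
      by (simp add: m'_def)
  qed
  ultimately have "multigraph V m'" using fin unfolding multigraph_def by blast
  moreover have "three_connected V m'"
  proof -
    have "card V > 3" using assms(3) by simp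
    moreover have "\<forall>u\<in>V. \<forall>v\<in>V. connected_on (V - {u, v}) m'"
    proof (intro ballI)
      fix u v assume "u \<in> V" "v \<in> V"
      then show "connected_on (V - {u, v}) m'" using conn_mono[OF mono conn] by blast
    qed
    ultimately show ?thesis unfolding three_connected_def by blast
  qed
  moreover have "\<forall>v\<in>V. degree V m' v = 4"
  proof
    fix v assume v: "v \<in> V"
    have sa: "(\<Sum>u\<in>V. a v u) = (if v \<in> D then 1 else 0)"
    proof (cases "v \<in> D")
      case True
      have "(\<Sum>u\<in>V. a v u) = (\<Sum>u\<in>D. a v u)"
      proof (rule sum.mono_neutral_right[OF fin DV])
        show "\<forall>i\<in>V - D. a v i = 0" using a(4) by (meson DiffD2 neq0_conv)
      qed
      then show ?thesis using True a(5) by simp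
    next
      case False
      then have "\<forall>u\<in>V. a v u = 0" using a(4) by (meson neq0_conv)
      then have "(\<Sum>u\<in>V. a v u) = 0" by (rule sum.neutral)
      then show ?thesis using False by simp
    qed
    have "degree V m' v = degree V m v + (\<Sum>u\<in>V. a v u)"
      using a(3) by (simp add: degree_def m'_def sum.distrib)
    moreover have "degree V m v + (if v \<in> D then 1 else 0) = 4"
    proof (cases "v \<in> D")
      case True then show ?thesis using degD by simp
    next
      case False then show ?thesis using v by (simp add: D_def)
    qed
    ultimately show "degree V m' v = 4" using sa by simp
  qed
  moreover have "\<forall>v. m' v v = 0" using loop a(3) by (simp add: m'_def)
  moreover have "\<forall>u v. m' u v \<le> 2"
  proof (intro allI)
    fix u v show "m' u v \<le> 2" using le1[rule_format, of u v] a(2)[rule_format, of u v]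
      by (simp add: m'_def)
  qed
  moreover have "\<forall>p q r s. 2 \<le> m' p q \<and> 2 \<le> m' r s \<longrightarrow> {p, q} = {r, s}"
    using a(6) by (simp add: m'_def)
  ultimately show ?thesis using mono by blast
qed

end
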